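(* Let $G$ be a finite group acting transitively on a finite set $X$, and let $\mathscr{A}$ be the algebra of complex $X\times X$ matrices $M$ with $M_{g\cdot x,g\cdot y}=M_{x,y}$ for all $g\in G$, $x,y\in X$. Let $\mathcal{G}\in\mathscr{A}$ and let $\Phi=\{\phi_x\}_{x\in X}$ be a family of vectors (spanning a Hilbert space $\mathcal{H}$) whose Gram matrix $[\langle\phi_y,\phi_x\rangle]_{x,y}$ equals $\mathcal{G}$. Then $\Phi$ is a tight frame for $\mathcal{H}$ if and only if any (equivalently, every) projective reduction of $\Phi$ is a tight frame for $\mathcal{H}$.
   Context: For a family $\Phi=\{\phi_x\}_{x\in X}$, $x\sim y$ means $\phi_y=\alpha\phi_x$ for some unimodular $\alpha$; a projective reduction of $\Phi$ consists of one vector $\phi_x$ from each $\sim$-equivalence class. A family is a tight frame for $\mathcal{H}$ if $\sum_x|\langle\psi,\phi_x\rangle|^2=A\|\psi\|^2$ for all $\psi\in\mathcal{H}$ and some constant $A>0$. *)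

theory Defs
  imports "HOL-Analysis.Analysis" "HOL-Algebra.Group_Action"
begin

text \<open>Vectors of a finite-dimensional complex Hilbert space are modelled as
  functions 'n \<Rightarrow> complex over a finite coordinate type 'n, with the standard
  inner product (linear in the first argument, conjugate-linear in the second).\<close>

definition cinner :: "('n::finite \<Rightarrow> complex) \<Rightarrow> ('n \<Rightarrow> complex) \<Rightarrow> complex" where
  "cinner u v = (\<Sum>i\<in>UNIV. u i * cnj (v i))"

definition cnorm2 :: "('n::finite \<Rightarrow> complex) \<Rightarrow> real" where
  "cnorm2 u = (\<Sum>i\<in>UNIV. (cmod (u i))\<^sup>2)"

definition cspan_fam :: "('x \<Rightarrow> ('n::finite \<Rightarrow> complex)) \<Rightarrow> 'x set \<Rightarrow> ('n \<Rightarrow> complex) set" where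
  "cspan_fam phi X = {psi. \<exists>c. psi = (\<lambda>i. \<Sum>x\<in>X. c x * phi x i)}"

definition tight_frame :: "('x \<Rightarrow> ('n::finite \<Rightarrow> complex)) \<Rightarrow> 'x set \<Rightarrow> ('n \<Rightarrow> complex) set \<Rightarrow> bool" where
  "tight_frame phi I H \<longleftrightarrow>
     (\<exists>A>0. \<forall>psi\<in>H. (\<Sum>x\<in>I. (cmod (cinner psi (phi x)))\<^sup>2) = A * cnorm2 psi)"

definition proj_equiv :: "('x \<Rightarrow> ('n \<Rightarrow> complex)) \<Rightarrow> 'x \<Rightarrow> 'x \<Rightarrow> bool" where
  "proj_equiv phi x y \<longleftrightarrow> (\<exists>\<alpha>::complex. cmod \<alpha> = 1 \<and> phi y = (\<lambda>i. \<alpha> * phi x i))"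

definition projective_reduction :: "('x \<Rightarrow> ('n \<Rightarrow> complex)) \<Rightarrow> 'x set \<Rightarrow> 'x set \<Rightarrow> bool" where
  "projective_reduction phi X R \<longleftrightarrow>
     R \<subseteq> X \<and> (\<forall>x\<in>X. \<exists>!r. r \<in> R \<and> proj_equiv phi x r)"

end

theory Submission
  imports Defs
begin

lemma cinner_expand:
  "cinner (\<lambda>i. v i - \<alpha> * u i) (\<lambda>i. v i - \<alpha> * u i) =
   cinner v v - cnj \<alpha> * cinner v u - \<alpha> * cinner u v + \<alpha> * cnj \<alpha> * cinner u u"
  unfolding cinner_def
  by (simp add: sum_distrib_left sum_subtractf[symmetric] sum.distrib[symmetric] algebra_simps)

lemma cinner_self_zero:
  assumes "cinner w w = 0" shows "w = (\<lambda>i. 0)"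
proof -
  have "cinner w w = of_real (\<Sum>i\<in>UNIV. (cmod (w i))\<^sup>2)"
    unfolding cinner_def of_real_sum by (simp add: complex_norm_square[symmetric])
  with assms have "complex_of_real (\<Sum>i\<in>UNIV. (cmod (w i))\<^sup>2) = 0" by (simp only:)
  then have "(\<Sum>i\<in>UNIV. (cmod (w i))\<^sup>2) = 0" by (simp only: of_real_eq_0_iff)
  then have "\<forall>i\<in>UNIV. (cmod (w i))\<^sup>2 = 0"
    by (subst sum_nonneg_eq_0_iff[symmetric]) auto
  then show ?thesis by auto
qed

lemma vec_eq:
  fixes u v a b :: "'n::finite \<Rightarrow> complex"
  assumes "cinner u u = cinner a a" "cinner v v = cinner b b" "cinner v u = cinner b a"
    "b = (\<lambda>i. \<alpha> * a i)"
  shows "v = (\<lambda>i. \<alpha> * u i)"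
proof -
  have cj: "cinner x y = cnj (cinner y x)" for x y :: "'n::finite \<Rightarrow> complex"
    unfolding cinner_def by (simp add: mult.commute)
  have "cinner (\<lambda>i. v i - \<alpha> * u i) (\<lambda>i. v i - \<alpha> * u i) =
        cinner (\<lambda>i. b i - \<alpha> * a i) (\<lambda>i. b i - \<alpha> * a i)"
    unfolding cinner_expand using assms(1-3) cj[of u v] cj[of a b] by simp
  also have "\<dots> = 0" using assms(4) by (simp add: cinner_def)
  finally have "(\<lambda>i. v i - \<alpha> * u i) = (\<lambda>i. 0)" by (rule cinner_self_zero)
  then show ?thesis by (metis eq_iff_diff_eq_0)
qed

lemma pe_refl: "proj_equiv phi x x"
  unfolding proj_equiv_def by (rule exI[of _ 1]) simp

lemma pe_sym: assumes "proj_equiv phi x y" shows "proj_equiv phi y x"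
proof -
  obtain \<alpha> where a: "cmod \<alpha> = 1" "phi y = (\<lambda>i. \<alpha> * phi x i)"
    using assms unfolding proj_equiv_def by blast
  have "cnj \<alpha> * \<alpha> = 1"
    using complex_norm_square[of \<alpha>] a(1) by (simp add: mult.commute)
  then have "phi x = (\<lambda>i. cnj \<alpha> * phi y i)"
    using a(2) by (simp add: mult.assoc[symmetric])
  then show ?thesis unfolding proj_equiv_def using a(1) by (intro exI[of _ "cnj \<alpha>"]) simp
qed

lemma pe_trans: assumes "proj_equiv phi x y" "proj_equiv phi y z" shows "proj_equiv phi x z"
proof -
  obtain \<alpha> where a: "cmod \<alpha> = 1" "phi y = (\<lambda>i. \<alpha> * phi x i)"
    using assms(1) unfolding proj_equiv_def by blast
  obtain \<beta> where b: "cmod \<beta> = 1" "phi z = (\<lambda>i. \<beta> * phi y i)"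
    using assms(2) unfolding proj_equiv_def by blast
  show ?thesis unfolding proj_equiv_def using a b
    by (intro exI[of _ "\<beta> * \<alpha>"]) (simp add: norm_mult mult.assoc)
qed

lemma pe_f:
  assumes "proj_equiv phi x y"
  shows "(cmod (cinner psi (phi x)))\<^sup>2 = (cmod (cinner psi (phi y)))\<^sup>2"
proof -
  obtain \<alpha> where a: "cmod \<alpha> = 1" "phi y = (\<lambda>i. \<alpha> * phi x i)"
    using assms unfolding proj_equiv_def by blast
  have "cinner psi (phi y) = cnj \<alpha> * cinner psi (phi x)"
    unfolding cinner_def a(2) by (simp add: sum_distrib_left algebra_simps)
  then show ?thesis using a(1) by (simp add: norm_mult)
qed

theorem corollary3p19:
  fixes G :: "('g, 'b) monoid_scheme"
    and X :: "'x set"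
    and act :: "'g \<Rightarrow> 'x \<Rightarrow> 'x"
    and phi :: "'x \<Rightarrow> ('n::finite \<Rightarrow> complex)"
    and H :: "('n \<Rightarrow> complex) set"
  assumes "transitive_action G X act"
    and "finite (carrier G)"
    and "finite X"
    and gram_inv: "\<forall>g\<in>carrier G. \<forall>x\<in>X. \<forall>y\<in>X.
                     cinner (phi (act g y)) (phi (act g x)) = cinner (phi y) (phi x)"
    and H_def: "H = cspan_fam phi X"
  shows "(tight_frame phi X H \<longleftrightarrow> (\<exists>R. projective_reduction phi X R \<and> tight_frame phi R H))
       \<and> (tight_frame phi X H \<longleftrightarrow> (\<forall>R. projective_reduction phi X R \<longrightarrow> tight_frame phi R H))"
proof -
  interpret T: transitive_action G X act by (rule assms(1))
  have actX: "act g x \<in> X" if "g \<in> carrier G" "x \<in> X" for g x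
    using T.surj_prop[OF that(1)] that(2) by blast
  have pe_act: "proj_equiv phi (act g x) (act g y)"
    if g: "g \<in> carrier G" and xy: "x \<in> X" "y \<in> X" and e: "proj_equiv phi x y" for g x y
  proof -
    obtain \<alpha> where a: "cmod \<alpha> = 1" "phi y = (\<lambda>i. \<alpha> * phi x i)"
      using e unfolding proj_equiv_def by blast
    have "phi (act g y) = (\<lambda>i. \<alpha> * phi (act g x) i)"
      by (rule vec_eq[OF _ _ _ a(2)]) (use gram_inv g xy in auto)
    then show ?thesis unfolding proj_equiv_def using a(1) by blast
  qed
  define cls where "cls r = {x\<in>X. proj_equiv phi x r}" for r
  have fin_cls: "finite (cls r)" for r unfolding cls_def using assms(3) by simp
  have card_le: "card (cls r) \<le> card (cls r')" if rr: "r \<in> X" "r' \<in> X" for r r'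
  proof -
    obtain g where g: "g \<in> carrier G" "act g r = r'" using T.unique_orbit[OF rr] by blast
    have "act g ` cls r \<subseteq> cls r'"
      unfolding cls_def using g actX pe_act rr by auto
    moreover have "inj_on (act g) (cls r)"
      using T.inj_prop[OF g(1)] unfolding cls_def by (rule inj_on_subset) auto
    ultimately show ?thesis using fin_cls card_inj_on_le by blast
  qed
  have card_eq: "card (cls r) = card (cls r')" if "r \<in> X" "r' \<in> X" for r r'
    using card_le[OF that] card_le[OF that(2,1)] by (rule antisym)
  define f where "f psi x = (cmod (cinner psi (phi x)))\<^sup>2" for psi x
  have key: "\<exists>k>0. \<forall>psi. (\<Sum>x\<in>X. f psi x) = k * (\<Sum>r\<in>R. f psi r)"
    if R: "projective_reduction phi X R" and ne: "X \<noteq> {}" for R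
  proof -
    have RX: "R \<subseteq> X" and ex1: "\<And>x. x \<in> X \<Longrightarrow> \<exists>!r. r \<in> R \<and> proj_equiv phi x r"
      using R unfolding projective_reduction_def by auto
    have finR: "finite R" using RX assms(3) finite_subset by blast
    obtain x0 where x0: "x0 \<in> X" using ne by blast
    define k where "k = card (cls x0)"
    have "x0 \<in> cls x0" unfolding cls_def using x0 pe_refl by simp
    then have kpos: "k > 0" unfolding k_def using fin_cls card_gt_0_iff by blast
    have "(\<Sum>x\<in>X. f psi x) = real k * (\<Sum>r\<in>R. f psi r)" for psi
    proof -
      have "(\<Sum>x\<in>X. f psi x) = (\<Sum>x\<in>X. \<Sum>r\<in>R. if proj_equiv phi x r then f psi r else 0)"
      proof (rule sum.cong[OF refl])
        fix x assume x: "x \<in> X"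
        obtain r0 where r0: "r0 \<in> R" "proj_equiv phi x r0"
          and u: "\<And>r. r \<in> R \<Longrightarrow> proj_equiv phi x r \<Longrightarrow> r = r0"
          using ex1[OF x] unfolding Ex1_def by blast
        have "(\<Sum>r\<in>R. if proj_equiv phi x r then f psi r else 0)
              = (\<Sum>r\<in>R. if r = r0 then f psi r else 0)"
          by (rule sum.cong[OF refl]) (metis u r0(2))
        also have "\<dots> = f psi r0" using sum.delta[OF finR, of r0 "f psi"] r0(1) by (simp only: if_True)
        also have "\<dots> = f psi x" unfolding f_def using pe_f[OF r0(2)] by simp
        finally show "f psi x = (\<Sum>r\<in>R. if proj_equiv phi x r then f psi r else 0)" by (rule sym)
      qed
      also have "\<dots> = (\<Sum>r\<in>R. \<Sum>x\<in>X. if proj_equiv phi x r then f psi r else 0)"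
        by (rule sum.swap)
      also have "\<dots> = (\<Sum>r\<in>R. real k * f psi r)"
      proof (rule sum.cong[OF refl])
        fix r assume r: "r \<in> R"
        have "(\<Sum>x\<in>X. if proj_equiv phi x r then f psi r else 0) = (\<Sum>x\<in>cls r. f psi r)"
          unfolding cls_def using sum.inter_filter[OF assms(3), where P="\<lambda>x. proj_equiv phi x r" and g="\<lambda>_. f psi r"]
          by (simp only:)
        also have "\<dots> = real (card (cls r)) * f psi r" by simp
        also have "card (cls r) = k" unfolding k_def using card_eq[of r x0] r RX x0 by auto
        finally show "(\<Sum>x\<in>X. if proj_equiv phi x r then f psi r else 0) = real k * f psi r" .
      qed
      also have "\<dots> = real k * (\<Sum>r\<in>R. f psi r)" by (simp add: sum_distrib_left)
      finally show ?thesis .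
    qed
    then show ?thesis using kpos by (intro exI[of _ "real k"]) auto
  qed
  have equiv: "tight_frame phi X H \<longleftrightarrow> tight_frame phi R H"
    if R: "projective_reduction phi X R" for R
  proof (cases "X = {}")
    case True
    then have "R = {}" using R unfolding projective_reduction_def by auto
    then show ?thesis using True by simp
  next
    case False
    obtain k :: real where k: "k > 0" "\<And>psi. (\<Sum>x\<in>X. f psi x) = k * (\<Sum>r\<in>R. f psi r)"
      using key[OF R False] by blast
    show ?thesis
    proof
      assume "tight_frame phi X H"
      then obtain A where A: "A > 0" "\<forall>psi\<in>H. (\<Sum>x\<in>X. f psi x) = A * cnorm2 psi"
        unfolding tight_frame_def f_def by blast
      have "\<forall>psi\<in>H. (\<Sum>r\<in>R. f psi r) = (A / k) * cnorm2 psi"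
        using A(2) k by (auto simp: field_simps)
      then show "tight_frame phi R H" unfolding tight_frame_def f_def
        using A(1) k(1) by (intro exI[of _ "A / k"]) auto
    next
      assume "tight_frame phi R H"
      then obtain A where A: "A > 0" "\<forall>psi\<in>H. (\<Sum>r\<in>R. f psi r) = A * cnorm2 psi"
        unfolding tight_frame_def f_def by blast
      have "\<forall>psi\<in>H. (\<Sum>x\<in>X. f psi x) = (k * A) * cnorm2 psi"
        using A(2) k by auto
      then show "tight_frame phi X H" unfolding tight_frame_def f_def
        using A(1) k(1) by (intro exI[of _ "k * A"]) auto
    qed
  qed
  define rep where "rep x = (SOME y. y \<in> {z\<in>X. proj_equiv phi x z})" for x
  have rep: "rep x \<in> X \<and> proj_equiv phi x (rep x)" if "x \<in> X" for x
  proof -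
    have "x \<in> {z\<in>X. proj_equiv phi x z}" using that pe_refl by simp
    then show ?thesis unfolding rep_def by (metis (mono_tags, lifting) mem_Collect_eq someI_ex)
  qed
  have rep_eq: "rep x = rep z" if "proj_equiv phi x z" for x z
  proof -
    have "{y\<in>X. proj_equiv phi x y} = {y\<in>X. proj_equiv phi z y}"
      using that pe_sym[OF that] pe_trans[of phi x z] pe_trans[of phi z x] by auto
    then show ?thesis unfolding rep_def by simp
  qed
  have exR: "projective_reduction phi X (rep ` X)"
    unfolding projective_reduction_def
  proof (intro conjI ballI)
    show "rep ` X \<subseteq> X" using rep by blast
  next
    fix x assume x: "x \<in> X"
    show "\<exists>!r. r \<in> rep ` X \<and> proj_equiv phi x r"
    proof (rule ex1I[of _ "rep x"])
      show "rep x \<in> rep ` X \<and> proj_equiv phi x (rep x)" using x rep by blast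
    next
      fix r assume r: "r \<in> rep ` X \<and> proj_equiv phi x r"
      then obtain z where z: "z \<in> X" "r = rep z" by blast
      have "proj_equiv phi z r" using rep z by simp
      then have "proj_equiv phi x z" using r pe_sym[of phi z r] pe_trans[of phi x r z] by auto
      then show "r = rep x" using rep_eq z by metis
    qed
  qed
  have e1: "tight_frame phi X H \<longleftrightarrow> (\<exists>R. projective_reduction phi X R \<and> tight_frame phi R H)"
    using equiv[OF exR] equiv exR by meson
  have e2: "tight_frame phi X H \<longleftrightarrow> (\<forall>R. projective_reduction phi X R \<longrightarrow> tight_frame phi R H)"
    using equiv[OF exR] equiv exR by meson
  show ?thesis using e1 e2 by (rule conjI)
qed

end
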